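(* Let $(\mathcal{H},L)$ have the uniform convergence property with respect to $\mathcal{D}$, with uniform convergence function $f$, let $\varepsilon>0$, $\alpha>0$, and assume $\Pr[\widehat{\Theta}_S^\varepsilon\neq\varnothing]>0$. (i) If the risk minimizer $\theta_0\in\arg\min_\Theta R$ exists, then $(\mathcal{H},L)$ is valid at level $\alpha$ and tolerance $\varepsilon$ whenever $m\ge f(\varepsilon/2,\alpha)$. (ii) If the risk minimizer does not exist, then $(\mathcal{H},L)$ is valid at level $\alpha$ and tolerance $\varepsilon$ whenever $m\ge\inf_{0<\delta<\varepsilon}f((\varepsilon-\delta)/2,\alpha)$.
   Context: Setting: data are i.i.d. from a distribution $\mathcal{D}$ on $\mathcal{X}\times\mathcal{Y}$; $\mathcal{H}=\{x\mapsto h(x;\theta)\mid\theta\in\Theta\}$ with $\Theta$ a topological space, $L:\mathcal{Y}\times\mathcal{Y}\to\mathbb{R}$ a loss; risk $R(\theta)=\mathbb{E}_{\mathcal{D}}[L(h(X;\theta),Y)]$ (finite), empirical risk $\widehat{R}_S(\theta)=\frac1m\sum_{i=1}^mL(h(X_i;\theta),Y_i)$ for $S\sim\mathcal{D}^m$. All events are assumed measurable. Uniform convergence property: there is $w:\mathbb{R}^+\times\mathbb{R}^+\to\mathbb{R}$ (a "witness") such that for all $\varepsilon,\alpha>0$ and integers $m\ge w(\varepsilon,\alpha)$, $\Pr_{S\sim\mathcal{D}^m}[\sup_{\theta}|R(\theta)-\widehat{R}_S(\theta)|\le\varepsilon]\ge1-\alpha$; the uniform convergence function is $f(\varepsilon,\alpha)=\inf_{w}\lceil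 w(\varepsilon,\alpha)\rceil$ over all witnesses $w$. $\widehat{\Theta}_S^\varepsilon=\{\theta\mid\widehat{R}_S(\theta)\le\inf_\vartheta\widehat{R}_S(\vartheta)+\varepsilon\}$, $\Theta_0^\delta=\{\theta\mid R(\theta)\le\inf_\vartheta R(\vartheta)+\delta\}$. The $\varepsilon$-plausibility of a Borel set $A\subseteq\Theta$ is $\mathrm{pl}_\varepsilon(A)=\Pr_{S\sim\mathcal{D}^m}[\widehat{\Theta}_S^\varepsilon\cap A\ne\varnothing\mid\widehat{\Theta}_S^\varepsilon\ne\varnothing]$. Validity: at a fixed sample size $m$, $(\mathcal{H},L)$ is valid at level $\alpha$ and tolerance $\varepsilon$ if for every Borel set $A\subseteq\Theta$ for which there exists $\delta\ge0$ with $\Theta_0^\delta\subseteq A$ and $\Theta_0^\delta\neq\varnothing$, one has $\mathrm{pl}_\varepsilon(A)\ge1-\alpha$. *)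

theory Defs
  imports "HOL-Probability.Probability"
begin

text \<open>Data points are pairs z = (x,y) distributed according to D.
  The hypothesis is h x \<theta> (= h(x;\<theta>)), the loss is L (prediction) y.\<close>

definition risk :: "('x \<times> 'y) measure \<Rightarrow> ('y \<Rightarrow> 'y \<Rightarrow> real) \<Rightarrow> ('x \<Rightarrow> 'p \<Rightarrow> 'y) \<Rightarrow> 'p \<Rightarrow> real" where
  "risk D L h \<theta> = (\<integral>z. L (h (fst z) \<theta>) (snd z) \<partial>D)"

definition emp_risk :: "('y \<Rightarrow> 'y \<Rightarrow> real) \<Rightarrow> ('x \<Rightarrow> 'p \<Rightarrow> 'y) \<Rightarrow> nat \<Rightarrow> (nat \<Rightarrow> 'x \<times> 'y) \<Rightarrow> 'p \<Rightarrow> real" where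
  "emp_risk L h m S \<theta> = (\<Sum>i<m. L (h (fst (S i)) \<theta>) (snd (S i))) / real m"

definition sample_measure :: "('x \<times> 'y) measure \<Rightarrow> nat \<Rightarrow> (nat \<Rightarrow> 'x \<times> 'y) measure" where
  "sample_measure D m = PiM {..<m} (\<lambda>_. D)"

definition uc_event :: "('x \<times> 'y) measure \<Rightarrow> ('y \<Rightarrow> 'y \<Rightarrow> real) \<Rightarrow> ('x \<Rightarrow> 'p \<Rightarrow> 'y) \<Rightarrow> nat \<Rightarrow> real \<Rightarrow> (nat \<Rightarrow> 'x \<times> 'y) set" where
  "uc_event D L h m \<epsilon> = {S \<in> space (sample_measure D m).
      (SUP \<theta>. ereal \<bar>risk D L h \<theta> - emp_risk L h m S \<theta>\<bar>) \<le> ereal \<epsilon>}"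

definition uc_witness :: "('x \<times> 'y) measure \<Rightarrow> ('y \<Rightarrow> 'y \<Rightarrow> real) \<Rightarrow> ('x \<Rightarrow> 'p \<Rightarrow> 'y) \<Rightarrow> (real \<Rightarrow> real \<Rightarrow> real) \<Rightarrow> bool" where
  "uc_witness D L h w \<longleftrightarrow>
     (\<forall>\<epsilon>>0. \<forall>\<alpha>>0. \<forall>m::nat. 0 < m \<and> w \<epsilon> \<alpha> \<le> real m \<longrightarrow>
        1 - \<alpha> \<le> measure (sample_measure D m) (uc_event D L h m \<epsilon>))"

definition has_uc_property :: "('x \<times> 'y) measure \<Rightarrow> ('y \<Rightarrow> 'y \<Rightarrow> real) \<Rightarrow> ('x \<Rightarrow> 'p \<Rightarrow> 'y) \<Rightarrow> bool" where
  "has_uc_property D L h \<longleftrightarrow> (\<exists>w. uc_witness D L h w)"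

text \<open>Uniform convergence function f(\<epsilon>,\<alpha>) = inf over witnesses of ceil(w(\<epsilon>,\<alpha>)),
  taken in the extended reals (so that an unbounded-below infimum is -\<infinity>).\<close>
definition uc_function :: "('x \<times> 'y) measure \<Rightarrow> ('y \<Rightarrow> 'y \<Rightarrow> real) \<Rightarrow> ('x \<Rightarrow> 'p \<Rightarrow> 'y) \<Rightarrow> real \<Rightarrow> real \<Rightarrow> ereal" where
  "uc_function D L h \<epsilon> \<alpha> = (INF w \<in> {w. uc_witness D L h w}. ereal (real_of_int \<lceil>w \<epsilon> \<alpha>\<rceil>))"

text \<open>\<Theta>_S^\<epsilon> (infimum in the extended reals; empty if the empirical risk is unbounded below).\<close>
definition emp_eps_set :: "('y \<Rightarrow> 'y \<Rightarrow> real) \<Rightarrow> ('x \<Rightarrow> 'p \<Rightarrow> 'y) \<Rightarrow> nat \<Rightarrow> (nat \<Rightarrow> 'x \<times> 'y) \<Rightarrow> real \<Rightarrow> 'p set" where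
  "emp_eps_set L h m S \<epsilon> =
     {\<theta>. ereal (emp_risk L h m S \<theta>) \<le> (INF t. ereal (emp_risk L h m S t)) + ereal \<epsilon>}"

definition risk_delta_set :: "('x \<times> 'y) measure \<Rightarrow> ('y \<Rightarrow> 'y \<Rightarrow> real) \<Rightarrow> ('x \<Rightarrow> 'p \<Rightarrow> 'y) \<Rightarrow> real \<Rightarrow> 'p set" where
  "risk_delta_set D L h \<delta> =
     {\<theta>. ereal (risk D L h \<theta>) \<le> (INF t. ereal (risk D L h t)) + ereal \<delta>}"

definition plausibility :: "('x \<times> 'y) measure \<Rightarrow> ('y \<Rightarrow> 'y \<Rightarrow> real) \<Rightarrow> ('x \<Rightarrow> 'p \<Rightarrow> 'y) \<Rightarrow> nat \<Rightarrow> real \<Rightarrow> 'p set \<Rightarrow> real" where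
  "plausibility D L h m \<epsilon> A =
     measure (sample_measure D m)
        {S \<in> space (sample_measure D m). emp_eps_set L h m S \<epsilon> \<inter> A \<noteq> {} \<and> emp_eps_set L h m S \<epsilon> \<noteq> {}}
     / measure (sample_measure D m) {S \<in> space (sample_measure D m). emp_eps_set L h m S \<epsilon> \<noteq> {}}"

definition valid :: "('x \<times> 'y) measure \<Rightarrow> ('y \<Rightarrow> 'y \<Rightarrow> real) \<Rightarrow> ('x \<Rightarrow> 'p::topological_space \<Rightarrow> 'y) \<Rightarrow> nat \<Rightarrow> real \<Rightarrow> real \<Rightarrow> bool" where
  "valid D L h m \<alpha> \<epsilon> \<longleftrightarrow>
     (\<forall>A \<in> sets borel. (\<exists>\<delta>\<ge>0. risk_delta_set D L h \<delta> \<subseteq> A \<and> risk_delta_set D L h \<delta> \<noteq> {})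
        \<longrightarrow> 1 - \<alpha> \<le> plausibility D L h m \<epsilon> A)"

definition events_measurable :: "('x \<times> 'y) measure \<Rightarrow> ('y \<Rightarrow> 'y \<Rightarrow> real) \<Rightarrow> ('x \<Rightarrow> 'p::topological_space \<Rightarrow> 'y) \<Rightarrow> bool" where
  "events_measurable D L h \<longleftrightarrow>
     (\<forall>m>0. \<forall>\<epsilon>>0.
        uc_event D L h m \<epsilon> \<in> sets (sample_measure D m) \<and>
        {S \<in> space (sample_measure D m). emp_eps_set L h m S \<epsilon> \<noteq> {}} \<in> sets (sample_measure D m) \<and>
        (\<forall>A \<in> sets borel. {S \<in> space (sample_measure D m). emp_eps_set L h m S \<epsilon> \<inter> A \<noteq> {}}
             \<in> sets (sample_measure D m)))"

end

theory Submission
  imports Defs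
begin

lemma in_emp_eps:
  assumes "\<And>t. \<bar>risk D L h t - emp_risk L h m S t\<bar> \<le> \<eta>"
    and "\<And>t. risk D L h \<theta> \<le> risk D L h t + d" and "d + 2*\<eta> \<le> \<epsilon>"
  shows "\<theta> \<in> emp_eps_set L h m S \<epsilon>"
proof -
  have "\<And>t. ereal (emp_risk L h m S \<theta> - \<epsilon>) \<le> ereal (emp_risk L h m S t)"
  proof -
    fix t
    have "\<bar>risk D L h t - emp_risk L h m S t\<bar> \<le> \<eta>" "\<bar>risk D L h \<theta> - emp_risk L h m S \<theta>\<bar> \<le> \<eta>"
      using assms(1) by auto
    moreover have "risk D L h \<theta> \<le> risk D L h t + d" by (rule assms(2))
    ultimately show "ereal (emp_risk L h m S \<theta> - \<epsilon>) \<le> ereal (emp_risk L h m S t)"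
      using assms(3) by (simp add: abs_le_iff)
  qed
  hence "ereal (emp_risk L h m S \<theta> - \<epsilon>) \<le> (INF t. ereal (emp_risk L h m S t))"
    by (rule INF_greatest)
  hence "ereal (emp_risk L h m S \<theta> - \<epsilon>) + ereal \<epsilon> \<le> (INF t. ereal (emp_risk L h m S t)) + ereal \<epsilon>"
    by (rule add_right_mono)
  thus ?thesis unfolding emp_eps_set_def by simp
qed

lemma uc_pointwise:
  assumes "S \<in> uc_event D L h m \<eta>"
  shows "\<bar>risk D L h t - emp_risk L h m S t\<bar> \<le> \<eta>"
proof -
  have "ereal \<bar>risk D L h t - emp_risk L h m S t\<bar> \<le> (SUP \<theta>. ereal \<bar>risk D L h \<theta> - emp_risk L h m S \<theta>\<bar>)"
    by (rule SUP_upper) simp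
  also have "\<dots> \<le> ereal \<eta>" using assms unfolding uc_event_def by simp
  finally show ?thesis by simp
qed

lemma uc_prob:
  assumes "uc_function D L h \<eta> \<alpha> < ereal (real m + 1)" "0 < \<eta>" "0 < \<alpha>" "0 < m"
  shows "1 - \<alpha> \<le> measure (sample_measure D m) (uc_event D L h m \<eta>)"
proof -
  from assms(1) obtain w where w: "uc_witness D L h w" "ereal (real_of_int \<lceil>w \<eta> \<alpha>\<rceil>) < ereal (real m + 1)"
    unfolding uc_function_def by (auto simp: INF_less_iff)
  hence "real_of_int \<lceil>w \<eta> \<alpha>\<rceil> < real m + 1" by simp
  hence "\<lceil>w \<eta> \<alpha>\<rceil> \<le> int m" by linarith
  hence "w \<eta> \<alpha> \<le> real m" by linarith
  thus ?thesis using w(1) assms unfolding uc_witness_def by blast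
qed

lemma core:
  assumes P: "prob_space D" and meas: "events_measurable D L h"
    and eps: "0 < \<epsilon>" and m: "0 < m" and eta: "0 < \<eta>"
    and pos: "0 < measure (sample_measure D m)
              {S \<in> space (sample_measure D m). emp_eps_set L h m S \<epsilon> \<noteq> {}}"
    and uc: "1 - \<alpha> \<le> measure (sample_measure D m) (uc_event D L h m \<eta>)"
    and A: "A \<in> sets borel"
    and ex: "\<exists>\<theta>\<in>A. \<forall>t. risk D L h \<theta> \<le> risk D L h t + d"
    and d: "d + 2*\<eta> \<le> \<epsilon>"
  shows "1 - \<alpha> \<le> plausibility D L h m \<epsilon> A"
proof -
  let ?M = "sample_measure D m"
  have ps: "prob_space ?M" unfolding sample_measure_def
    by (rule prob_space_PiM) (use P in auto)
  obtain \<theta> where th: "\<theta> \<in> A" "\<And>t. risk D L h \<theta> \<le> risk D L h t + d" using ex by blast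
  let ?EA = "{S \<in> space ?M. emp_eps_set L h m S \<epsilon> \<inter> A \<noteq> {} \<and> emp_eps_set L h m S \<epsilon> \<noteq> {}}"
  let ?E = "{S \<in> space ?M. emp_eps_set L h m S \<epsilon> \<noteq> {}}"
  have eqA: "?EA = {S \<in> space ?M. emp_eps_set L h m S \<epsilon> \<inter> A \<noteq> {}}" by auto
  have EAm: "?EA \<in> sets ?M" using meas m eps A unfolding eqA events_measurable_def by blast
  have sub: "uc_event D L h m \<eta> \<subseteq> ?EA"
  proof
    fix S assume S: "S \<in> uc_event D L h m \<eta>"
    have "\<theta> \<in> emp_eps_set L h m S \<epsilon>"
      by (rule in_emp_eps[OF uc_pointwise[OF S] th(2) d])
    with th(1) S show "S \<in> ?EA" unfolding uc_event_def by auto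
  qed
  have mu: "measure ?M (uc_event D L h m \<eta>) \<le> measure ?M ?EA"
    using ps sub EAm by (meson prob_space.axioms(1) finite_measure.finite_measure_mono)
  moreover have "measure ?M ?E \<le> 1" using ps by (simp add: prob_space.prob_le_1)
  moreover have "0 \<le> measure ?M ?EA" by simp
  ultimately have "measure ?M ?EA \<le> measure ?M ?EA / measure ?M ?E"
    using pos by (simp add: le_divide_eq mult_left_le)
  thus ?thesis using uc mu unfolding plausibility_def by linarith
qed

theorem mainTheorem4:
  fixes D :: "('x \<times> 'y) measure" and L :: "'y \<Rightarrow> 'y \<Rightarrow> real"
    and h :: "'x \<Rightarrow> 'p::topological_space \<Rightarrow> 'y"
    and m :: nat and \<epsilon> \<alpha> :: real
  assumes "prob_space D"
    and "\<And>\<theta>. integrable D (\<lambda>z. L (h (fst z) \<theta>) (snd z))"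
    and "events_measurable D L h"
    and "has_uc_property D L h"
    and "0 < \<epsilon>" and "0 < \<alpha>" and "0 < m"
    and "0 < measure (sample_measure D m)
              {S \<in> space (sample_measure D m). emp_eps_set L h m S \<epsilon> \<noteq> {}}"
  shows "((\<exists>\<theta>\<^sub>0. \<forall>\<theta>. risk D L h \<theta>\<^sub>0 \<le> risk D L h \<theta>) \<longrightarrow>
            uc_function D L h (\<epsilon> / 2) \<alpha> \<le> ereal (real m) \<longrightarrow> valid D L h m \<alpha> \<epsilon>)
       \<and> ((\<not> (\<exists>\<theta>\<^sub>0. \<forall>\<theta>. risk D L h \<theta>\<^sub>0 \<le> risk D L h \<theta>)) \<longrightarrow>
            (INF \<delta> \<in> {0<..<\<epsilon>}. uc_function D L h ((\<epsilon> - \<delta>) / 2) \<alpha>) \<le> ereal (real m) \<longrightarrow>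
            valid D L h m \<alpha> \<epsilon>)"
proof (intro conjI impI)
  have P: "prob_space D" and meas: "events_measurable D L h" and eps: "0 < \<epsilon>"
    and al: "0 < \<alpha>" and m: "0 < m" and pos: "0 < measure (sample_measure D m)
              {S \<in> space (sample_measure D m). emp_eps_set L h m S \<epsilon> \<noteq> {}}"
    using assms by auto
  {
    assume ex: "\<exists>\<theta>\<^sub>0. \<forall>\<theta>. risk D L h \<theta>\<^sub>0 \<le> risk D L h \<theta>"
      and f: "uc_function D L h (\<epsilon> / 2) \<alpha> \<le> ereal (real m)"
    then obtain t0 where t0: "\<forall>\<theta>. risk D L h t0 \<le> risk D L h \<theta>" by blast
    have f1: "uc_function D L h (\<epsilon> / 2) \<alpha> < ereal (real m + 1)" using f
      by (rule le_less_trans) simp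
    have uc: "1 - \<alpha> \<le> measure (sample_measure D m) (uc_event D L h m (\<epsilon>/2))"
      by (rule uc_prob[OF f1]) (use eps al m in auto)
    show "valid D L h m \<alpha> \<epsilon>" unfolding valid_def
    proof (intro ballI impI)
      fix A :: "'p set" assume A: "A \<in> sets borel"
        and "\<exists>\<delta>\<ge>0. risk_delta_set D L h \<delta> \<subseteq> A \<and> risk_delta_set D L h \<delta> \<noteq> {}"
      then obtain \<delta> where dl: "\<delta> \<ge> 0" "risk_delta_set D L h \<delta> \<subseteq> A" by blast
      have "(INF t. ereal (risk D L h t)) = ereal (risk D L h t0)"
        by (rule antisym) (auto intro: INF_lower INF_greatest simp: t0)
      hence "t0 \<in> risk_delta_set D L h \<delta>" unfolding risk_delta_set_def using dl(1) by simp
      hence "\<exists>\<theta>\<in>A. \<forall>t. risk D L h \<theta> \<le> risk D L h t + 0" using dl t0 by auto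
      thus "1 - \<alpha> \<le> plausibility D L h m \<epsilon> A"
        by (intro core[OF P meas eps m _ pos uc A, where d=0]) (use eps in auto)
    qed
  }
  {
    assume nex: "\<not> (\<exists>\<theta>\<^sub>0. \<forall>\<theta>. risk D L h \<theta>\<^sub>0 \<le> risk D L h \<theta>)"
      and f: "(INF \<delta> \<in> {0<..<\<epsilon>}. uc_function D L h ((\<epsilon> - \<delta>) / 2) \<alpha>) \<le> ereal (real m)"
    have "(INF \<delta> \<in> {0<..<\<epsilon>}. uc_function D L h ((\<epsilon> - \<delta>) / 2) \<alpha>) < ereal (real m + 1)"
      using f by (rule le_less_trans) simp
    then obtain \<delta>0 where d0: "\<delta>0 \<in> {0<..<\<epsilon>}" "uc_function D L h ((\<epsilon> - \<delta>0) / 2) \<alpha> < ereal (real m + 1)"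
      by (auto simp: INF_less_iff)
    have uc: "1 - \<alpha> \<le> measure (sample_measure D m) (uc_event D L h m ((\<epsilon> - \<delta>0) / 2))"
      by (rule uc_prob[OF d0(2)]) (use d0(1) al m in auto)
    show "valid D L h m \<alpha> \<epsilon>" unfolding valid_def
    proof (intro ballI impI)
      fix A :: "'p set" assume A: "A \<in> sets borel"
        and "\<exists>\<delta>\<ge>0. risk_delta_set D L h \<delta> \<subseteq> A \<and> risk_delta_set D L h \<delta> \<noteq> {}"
      then obtain \<delta> t1 where dl: "\<delta> \<ge> 0" "risk_delta_set D L h \<delta> \<subseteq> A"
        "t1 \<in> risk_delta_set D L h \<delta>" by blast
      let ?I = "INF t. ereal (risk D L h t)"
      have t1: "ereal (risk D L h t1) \<le> ?I + ereal \<delta>" using dl(3) unfolding risk_delta_set_def by simp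
      have "?I \<noteq> -\<infinity>" using t1 by auto
      moreover have "?I \<le> ereal (risk D L h t1)" by (rule INF_lower) simp
      ultimately obtain r where r: "?I = ereal r" by (cases ?I) auto
      have rle: "\<And>t. r \<le> risk D L h t"
      proof -
        fix t have "?I \<le> ereal (risk D L h t)" by (rule INF_lower) simp
        thus "r \<le> risk D L h t" using r by simp
      qed
      have "\<delta> \<noteq> 0"
      proof
        assume "\<delta> = 0"
        hence "risk D L h t1 \<le> r" using t1 r by simp
        hence "\<forall>\<theta>. risk D L h t1 \<le> risk D L h \<theta>" using rle by (meson order_trans)
        thus False using nex by blast
      qed
      hence dpos: "\<delta> > 0" using dl(1) by simp
      let ?e = "min \<delta>0 \<delta>"
      have "?e > 0" using dpos d0(1) by simp
      hence "?I < ereal (r + ?e)" using r by simp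
      then obtain \<theta> where th: "ereal (risk D L h \<theta>) < ereal (r + ?e)" by (auto simp: INF_less_iff)
      hence "\<theta> \<in> risk_delta_set D L h \<delta>" unfolding risk_delta_set_def using r by simp
      hence "\<theta> \<in> A" using dl(2) by blast
      moreover have "\<forall>t. risk D L h \<theta> \<le> risk D L h t + \<delta>0"
        proof
        fix t have "risk D L h \<theta> < r + ?e" using th by simp
        thus "risk D L h \<theta> \<le> risk D L h t + \<delta>0" using rle[of t] by linarith
      qed
      ultimately have "\<exists>\<theta>\<in>A. \<forall>t. risk D L h \<theta> \<le> risk D L h t + \<delta>0" by blast
      thus "1 - \<alpha> \<le> plausibility D L h m \<epsilon> A"
        by (intro core[OF P meas eps m _ pos uc A, where d=\<delta>0]) (use d0(1) in \<open>auto simp: field_simps\<close>)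
    qed
  }
qed

end
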